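(* Let $a$ and $b$ be nonidentity elements of a group $G$ and let $n$ be a positive integer. Then $$\mathrm{cl}([a,b]^n) \le \left\lfloor \frac{n}{2}\right\rfloor - \left\lfloor \frac{n}{\mathrm{ord}(a)}\right\rfloor + 1.$$
   Context: $[x,y]=x^{-1}y^{-1}xy$. The commutator length $\mathrm{cl}(h)$ of an element $h$ of the commutator subgroup is the minimal $k$ such that $h$ is a product of $k$ commutators. $\mathrm{ord}(a)$ is the order of $a$ (possibly $\infty$); if $\mathrm{ord}(a)=\infty$, the term $\lfloor n/\mathrm{ord}(a)\rfloor$ is interpreted as $0$. $\lfloor x\rfloor$ denotes the integer part of $x$. *)

theory Defs
  imports "HOL-Algebra.Multiplicative_Group"
begin

definition commutator :: "('a, 'b) monoid_scheme \<Rightarrow> 'a \<Rightarrow> 'a \<Rightarrow> 'a" where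
  "commutator G x y = inv\<^bsub>G\<^esub> x \<otimes>\<^bsub>G\<^esub> inv\<^bsub>G\<^esub> y \<otimes>\<^bsub>G\<^esub> x \<otimes>\<^bsub>G\<^esub> y"

fun comm_prod :: "('a, 'b) monoid_scheme \<Rightarrow> ('a \<times> 'a) list \<Rightarrow> 'a" where
  "comm_prod G [] = \<one>\<^bsub>G\<^esub>"
| "comm_prod G ((x, y) # ps) = commutator G x y \<otimes>\<^bsub>G\<^esub> comm_prod G ps"

definition prod_of_commutators :: "('a, 'b) monoid_scheme \<Rightarrow> nat \<Rightarrow> 'a \<Rightarrow> bool" where
  "prod_of_commutators G k h \<longleftrightarrow>
     (\<exists>ps. length ps = k \<and> set ps \<subseteq> carrier G \<times> carrier G \<and> h = comm_prod G ps)"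

definition commutator_length :: "('a, 'b) monoid_scheme \<Rightarrow> 'a \<Rightarrow> nat" where
  "commutator_length G h = (LEAST k. prod_of_commutators G k h)"

end

theory Submission
  imports Defs
begin

lemma div_pred: "\<not> (M::nat) dvd n \<Longrightarrow> 0 < M \<Longrightarrow> (n - 1) div M = n div M"
proof -
  assume nd: "\<not> M dvd n" and M: "0 < M"
  have r: "0 < n mod M" using nd by (simp add: dvd_eq_mod_eq_0)
  have "n = n mod M + M * (n div M)" by simp
  then have "n - 1 = (n mod M - 1) + M * (n div M)" using r by linarith
  then have "(n - 1) div M = n div M + (n mod M - 1) div M"
    using div_mult_self2[of M "n mod M - 1" "n div M"] M by simp
  moreover have "(n mod M - 1) div M = 0" using M by (simp add: less_imp_diff_less)
  ultimately show ?thesis by simp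
qed

context group begin

lemma canc1[simp]: "x \<in> carrier G \<Longrightarrow> y \<in> carrier G \<Longrightarrow> x \<otimes> (inv x \<otimes> y) = y"
  by (simp add: m_assoc[symmetric])
lemma canc2[simp]: "x \<in> carrier G \<Longrightarrow> y \<in> carrier G \<Longrightarrow> inv x \<otimes> (x \<otimes> y) = y"
  by (simp add: m_assoc[symmetric])

lemma commutator_closed[simp]: "x \<in> carrier G \<Longrightarrow> y \<in> carrier G \<Longrightarrow> commutator G x y \<in> carrier G"
  by (simp add: commutator_def)

lemma comm_prod_closed: "set ps \<subseteq> carrier G \<times> carrier G \<Longrightarrow> comm_prod G ps \<in> carrier G"
  by (induction ps) auto

lemma comm_prod_append:
  "set ps \<subseteq> carrier G \<times> carrier G \<Longrightarrow> set qs \<subseteq> carrier G \<times> carrier G \<Longrightarrow>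
   comm_prod G (ps @ qs) = comm_prod G ps \<otimes> comm_prod G qs"
  by (induction ps) (auto simp: m_assoc comm_prod_closed)

lemma commutator_conj:
  assumes "x \<in> carrier G" "y \<in> carrier G" "g \<in> carrier G"
  shows "commutator G (inv g \<otimes> x \<otimes> g) (inv g \<otimes> y \<otimes> g) = inv g \<otimes> commutator G x y \<otimes> g"
  using assms by (simp add: commutator_def inv_mult_group m_assoc)

lemma comm_prod_conj:
  assumes "set ps \<subseteq> carrier G \<times> carrier G" "g \<in> carrier G"
  shows "comm_prod G (map (\<lambda>(x,y). (inv g \<otimes> x \<otimes> g, inv g \<otimes> y \<otimes> g)) ps) = inv g \<otimes> comm_prod G ps \<otimes> g"
  using assms
proof (induction ps)
  case Nil then show ?case by simp
next
  case (Cons p ps)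
  obtain x y where p: "p = (x,y)" by fastforce
  have xy: "x \<in> carrier G" "y \<in> carrier G" using Cons.prems p by auto
  have ps: "set ps \<subseteq> carrier G \<times> carrier G" using Cons.prems by auto
  have "comm_prod G (map (\<lambda>(x,y). (inv g \<otimes> x \<otimes> g, inv g \<otimes> y \<otimes> g)) (p # ps))
      = (inv g \<otimes> commutator G x y \<otimes> g) \<otimes> (inv g \<otimes> comm_prod G ps \<otimes> g)"
    using Cons p xy ps by (simp add: commutator_conj)
  also have "\<dots> = inv g \<otimes> (commutator G x y \<otimes> comm_prod G ps) \<otimes> g"
    using xy ps Cons.prems by (simp add: m_assoc comm_prod_closed)
  finally show ?case using p by simp
qed

lemma pc_carrier: "prod_of_commutators G k h \<Longrightarrow> h \<in> carrier G"
  by (auto simp: prod_of_commutators_def comm_prod_closed)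

lemma pc_zero: "prod_of_commutators G 0 \<one>"
  by (auto simp: prod_of_commutators_def)

lemma pc_comm: "x \<in> carrier G \<Longrightarrow> y \<in> carrier G \<Longrightarrow> prod_of_commutators G 1 (commutator G x y)"
  unfolding prod_of_commutators_def
  by (rule exI[of _ "[(x,y)]"]) (simp add: commutator_def)

lemma pc_mult: "prod_of_commutators G k x \<Longrightarrow> prod_of_commutators G l y \<Longrightarrow> prod_of_commutators G (k + l) (x \<otimes> y)"
  unfolding prod_of_commutators_def
  by (metis comm_prod_append length_append set_append Un_subset_iff)

lemma pc_conj: "prod_of_commutators G k x \<Longrightarrow> g \<in> carrier G \<Longrightarrow> prod_of_commutators G k (inv g \<otimes> x \<otimes> g)"
  unfolding prod_of_commutators_def
  apply clarify
  subgoal for ps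
    apply (rule exI[of _ "map (\<lambda>(x,y). (inv g \<otimes> x \<otimes> g, inv g \<otimes> y \<otimes> g)) ps"])
    apply (auto simp: comm_prod_conj)
    done
  done

lemma pc_mono: "prod_of_commutators G k x \<Longrightarrow> k \<le> l \<Longrightarrow> prod_of_commutators G l x"
proof -
  assume h: "prod_of_commutators G k x" "k \<le> l"
  have "prod_of_commutators G (l - k) \<one>"
    unfolding prod_of_commutators_def
  proof (rule exI[of _ "replicate (l-k) (\<one>,\<one>)"])
    have "comm_prod G (replicate j (\<one>,\<one>)) = \<one>" for j
      by (induction j) (auto simp: commutator_def)
    then show "length (replicate (l - k) (\<one>, \<one>)) = l - k \<and>
      set (replicate (l - k) (\<one>, \<one>)) \<subseteq> carrier G \<times> carrier G \<and>
      \<one> = comm_prod G (replicate (l - k) (\<one>, \<one>))" by auto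
  qed
  from pc_mult[OF h(1) this] h show ?thesis
    using pc_carrier[OF h(1)] by simp
qed

lemma cl_le: "prod_of_commutators G k x \<Longrightarrow> commutator_length G x \<le> k"
  unfolding commutator_length_def by (rule Least_le)

lemma pc_move:
  assumes "prod_of_commutators G k (v \<otimes> u)" "u \<in> carrier G" "v \<in> carrier G" "x \<in> carrier G" "y \<in> carrier G"
  shows "prod_of_commutators G (Suc k) (u \<otimes> commutator G x y \<otimes> v)"
proof -
  have vu: "v \<otimes> u \<in> carrier G" using assms by simp
  have "prod_of_commutators G (1 + k) (commutator G x y \<otimes> (v \<otimes> u))"
    by (rule pc_mult[OF pc_comm assms(1)]) (use assms in auto)
  then have "prod_of_commutators G (1 + k) (inv (inv u) \<otimes> (commutator G x y \<otimes> (v \<otimes> u)) \<otimes> inv u)"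
    by (rule pc_conj) (use assms in auto)
  moreover have "inv (inv u) \<otimes> (commutator G x y \<otimes> (v \<otimes> u)) \<otimes> inv u = u \<otimes> commutator G x y \<otimes> v"
    using assms by (simp add: m_assoc)
  ultimately show ?thesis by simp
qed

lemma pc_conj': "prod_of_commutators G k x \<Longrightarrow> g \<in> carrier G \<Longrightarrow> prod_of_commutators G k (g \<otimes> x \<otimes> inv g)"
  using pc_conj[of k x "inv g"] by simp

lemma pc_rot: "prod_of_commutators G k (v \<otimes> u) \<Longrightarrow> u \<in> carrier G \<Longrightarrow> v \<in> carrier G \<Longrightarrow> prod_of_commutators G k (u \<otimes> v)"
  using pc_conj'[of k "v \<otimes> u" u] by (simp add: m_assoc)

end

locale CL = group G for G (structure) +
  fixes a b assumes a[simp]: "a \<in> carrier G" and b[simp]: "b \<in> carrier G"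
begin

definition ph :: "int \<Rightarrow> 'a \<Rightarrow> 'a" where "ph k x = inv (a [^] k) \<otimes> x \<otimes> a [^] k"
definition bt :: "int \<Rightarrow> 'a" where "bt k = ph k b"
definition cc :: 'a where "cc = commutator G a b"
definition RR :: "int \<Rightarrow> 'a" where "RR L = inv (bt 0) \<otimes> bt (- L)"
definition PP :: "int \<Rightarrow> 'a" where "PP L = inv (bt 1) \<otimes> bt (1 - L)"
definition TT :: "int \<Rightarrow> nat \<Rightarrow> 'a" where "TT L N = cc [^] N \<otimes> RR L"

lemma ph_closed[simp]: "x \<in> carrier G \<Longrightarrow> ph k x \<in> carrier G" by (simp add: ph_def)
lemma bt_closed[simp]: "bt k \<in> carrier G" by (simp add: bt_def)
lemma cc_closed[simp]: "cc \<in> carrier G" by (simp add: cc_def)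
lemma RR_closed[simp]: "RR L \<in> carrier G" by (simp add: RR_def)
lemma PP_closed[simp]: "PP L \<in> carrier G" by (simp add: PP_def)
lemma TT_closed[simp]: "TT L N \<in> carrier G" by (simp add: TT_def)

lemma ph_mult: "x \<in> carrier G \<Longrightarrow> y \<in> carrier G \<Longrightarrow> ph k (x \<otimes> y) = ph k x \<otimes> ph k y"
  by (simp add: ph_def m_assoc)
lemma ph_inv: "x \<in> carrier G \<Longrightarrow> ph k (inv x) = inv (ph k x)"
  by (simp add: ph_def inv_mult_group m_assoc)
lemma ph_ph: "x \<in> carrier G \<Longrightarrow> ph k (ph l x) = ph (l + k) x"
  by (simp add: ph_def int_pow_mult inv_mult_group m_assoc)
lemma ph_0[simp]: "x \<in> carrier G \<Longrightarrow> ph 0 x = x"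
  by (simp add: ph_def)
lemma ph_one[simp]: "ph k \<one> = \<one>"
  by (simp add: ph_def)
lemma ph_pow: "x \<in> carrier G \<Longrightarrow> ph k (x [^] (n::nat)) = (ph k x) [^] n"
  by (induction n) (simp_all add: ph_mult)

lemma cc_bt: "cc = inv (bt 1) \<otimes> bt 0"
  by (simp add: cc_def commutator_def bt_def ph_def inv_mult_group m_assoc)

lemma ph_cc: "ph k cc = inv (bt (k + 1)) \<otimes> bt k"
  by (simp add: cc_bt ph_mult ph_inv bt_def ph_ph add.commute)

lemma apow_comm: "a [^] (k::int) \<otimes> a [^] (l::int) = a [^] l \<otimes> a [^] k"
  by (simp flip: int_pow_mult add: add.commute)
lemma apow_comm2: "z \<in> carrier G \<Longrightarrow> inv (a [^] (k::int)) \<otimes> (inv (a [^] (l::int)) \<otimes> (a [^] k \<otimes> z)) = inv (a [^] l) \<otimes> z"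
proof -
  assume z: "z \<in> carrier G"
  have "inv (a [^] k) \<otimes> inv (a [^] l) = inv (a [^] l) \<otimes> inv (a [^] k)"
    by (simp flip: inv_mult_group add: apow_comm)
  then have "inv (a [^] k) \<otimes> (inv (a [^] l) \<otimes> (a [^] k \<otimes> z)) = inv (a [^] l) \<otimes> inv (a [^] k) \<otimes> (a [^] k \<otimes> z)"
    using z by (simp flip: m_assoc)
  then show ?thesis using z by (simp add: m_assoc)
qed

lemma Qlemma:
  assumes "x \<in> carrier G" "y \<in> carrier G"
  shows "ph l x \<otimes> y = ph k y \<otimes> x \<otimes> commutator G (a [^] k \<otimes> x) (a [^] l \<otimes> y)"
  using assms by (simp add: ph_def commutator_def inv_mult_group m_assoc apow_comm2)

lemma pc_ph: "prod_of_commutators G n x \<Longrightarrow> prod_of_commutators G n (ph k x)"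
  unfolding ph_def by (rule pc_conj) auto

lemma cc_pow2: "cc [^] ((N::nat) + 2) = cc \<otimes> (cc \<otimes> cc [^] N)"
proof -
  have "cc [^] (N + 2) = cc [^] (Suc (Suc N))" by simp
  also have "\<dots> = cc \<otimes> (cc \<otimes> cc [^] N)" by (simp only: nat_pow_Suc2 cc_closed)
  finally show ?thesis .
qed

lemma RR_step: "RR L \<otimes> (ph (- L - 1) cc \<otimes> ph (- L - 2) cc) = RR (L + 2)"
proof -
  have e1: "- L - 1 + 1 = - L" "- L - 2 + 1 = - L - 1" "- (L + 2) = - L - 2" by simp_all
  show ?thesis unfolding RR_def ph_cc e1 by (simp add: m_assoc)
qed

lemma ext:
  assumes "prod_of_commutators G k (TT (L + 2) N)"
  shows "prod_of_commutators G (Suc k) (TT L (N + 2))"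
proof -
  define u where "u = ph (- L - 1) cc \<otimes> ph (- L - 2) cc"
  define v where "v = cc [^] N \<otimes> RR L"
  define x where "x = a [^] (- L - 1) \<otimes> ph (- L - 2) cc"
  define y where "y = a [^] (L + 2) \<otimes> cc"
  have q: "cc \<otimes> cc = u \<otimes> commutator G x y"
    using Qlemma[of "ph (- L - 2) cc" cc "L + 2" "- L - 1"]
    by (simp add: u_def x_def y_def ph_ph m_assoc)
  have "TT L (N + 2) = (cc \<otimes> cc) \<otimes> v"
    unfolding TT_def v_def cc_pow2 by (simp add: m_assoc)
  also have "\<dots> = u \<otimes> commutator G x y \<otimes> v" by (simp add: q)
  finally have t: "TT L (N + 2) = u \<otimes> commutator G x y \<otimes> v" .
  have "v \<otimes> u = TT (L + 2) N"
    by (simp add: v_def u_def TT_def m_assoc RR_step)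
  with assms have "prod_of_commutators G k (v \<otimes> u)" by simp
  from pc_move[OF this] show ?thesis unfolding t by (simp add: u_def v_def x_def y_def)
qed

lemma ph_bt: "ph k (bt l) = bt (l + k)"
  by (simp add: bt_def ph_ph)

lemma move2:
  assumes "prod_of_commutators G k X" "g \<in> carrier G" "u \<in> carrier G" "v \<in> carrier G"
    "x \<in> carrier G" "y \<in> carrier G" "v \<otimes> u = inv g \<otimes> ph j X \<otimes> g"
  shows "prod_of_commutators G (Suc k) (u \<otimes> commutator G x y \<otimes> v)"
proof -
  have "prod_of_commutators G k (inv g \<otimes> ph j X \<otimes> g)"
    by (rule pc_conj[OF pc_ph[OF assms(1)] assms(2)])
  then show ?thesis using assms by (intro pc_move) auto
qed

lemma RR0[simp]: "RR 0 = \<one>" by (simp add: RR_def)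
lemma TT0: "TT 0 N = cc [^] N" by (simp add: TT_def)
lemma RR1: "RR 1 = ph (- 1) cc" by (simp add: RR_def ph_cc)

lemma comm_a: "w \<in> carrier G \<Longrightarrow> commutator G a w = ph 1 (inv w) \<otimes> w"
  by (simp add: commutator_def ph_def m_assoc)

lemma E1:
  assumes "prod_of_commutators G k (TT 1 N)"
  shows "prod_of_commutators G (Suc k) (cc [^] (N + 2))"
proof -
  define w where "w = bt 0 \<otimes> inv (bt (- 1)) \<otimes> bt 0"
  have w: "w \<in> carrier G" by (simp add: w_def)
  have q: "cc \<otimes> cc = commutator G a w \<otimes> RR 1"
    by (simp add: comm_a w ph_inv ph_mult w_def ph_bt cc_bt RR_def inv_mult_group m_assoc)
  have "cc [^] (N + 2) = cc [^] N \<otimes> (cc \<otimes> cc)"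
    by (simp add: nat_pow_mult[symmetric] numeral_2_eq_2 m_assoc)
  also have "\<dots> = cc [^] N \<otimes> commutator G a w \<otimes> RR 1" by (simp add: q m_assoc w)
  finally have t: "cc [^] (N + 2) = cc [^] N \<otimes> commutator G a w \<otimes> RR 1" .
  have "prod_of_commutators G k (RR 1 \<otimes> cc [^] N)"
    using assms unfolding TT_def by (rule pc_rot) auto
  from pc_move[OF this] show ?thesis unfolding t using w by simp
qed

lemma apow_m1: "a [^] ((k::int) - 1) \<otimes> a = a [^] k"
  using int_pow_mult[of a "k - 1" 1] by simp

lemma Lend: "prod_of_commutators G 1 (TT L 1)"
proof -
  have e: "TT L 1 = inv a \<otimes> commutator G b (a [^] (- L - 1)) \<otimes> a"
  proof -
    have i0: "a [^] (- L - 1) = a [^] (- L) \<otimes> inv a"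
      using int_pow_mult[of a "- L" "- 1"] int_pow_neg[of a 1] by simp
    have i1: "inv (a [^] (- L - 1)) = a \<otimes> inv (a [^] (- L))"
      unfolding i0 by (simp add: inv_mult_group)
    have i2: "a [^] (- L - 1) \<otimes> a = a [^] (- L)" using apow_m1[of "- L"] by simp
    have "TT L 1 = inv a \<otimes> inv b \<otimes> a \<otimes> inv (a [^] (- L)) \<otimes> b \<otimes> a [^] (- L)"
      by (simp add: TT_def cc_bt RR_def bt_def ph_def inv_mult_group m_assoc)
    also have "\<dots> = inv a \<otimes> (inv b \<otimes> inv (a [^] (- L - 1)) \<otimes> b \<otimes> a [^] (- L - 1)) \<otimes> a"
      by (simp add: i1 m_assoc i2[symmetric])
    finally show ?thesis by (simp add: commutator_def)
  qed
  show ?thesis unfolding e by (rule pc_conj[OF pc_comm]) auto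
qed

lemma peel: "prod_of_commutators G k (cc [^] (N::nat)) \<Longrightarrow> prod_of_commutators G (Suc k) (cc [^] (N + 1))"
proof -
  assume h: "prod_of_commutators G k (cc [^] N)"
  have "prod_of_commutators G 1 cc" unfolding cc_def by (rule pc_comm) auto
  from pc_mult[OF h this] have "prod_of_commutators G (k + 1) (cc [^] N \<otimes> cc)" .
  moreover have "cc [^] (N + 1) = cc [^] N \<otimes> cc" by simp
  ultimately show ?thesis by simp
qed



lemma extchain: "prod_of_commutators G k (TT (L + 2 * int i) N) \<Longrightarrow> prod_of_commutators G (k + i) (TT L (N + 2 * i))"
proof (induction i arbitrary: k L N)
  case 0 then show ?case by simp
next
  case (Suc i)
  have "prod_of_commutators G k (TT ((L + 2) + 2 * int i) N)" using Suc.prems by (simp add: algebra_simps)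
  from Suc.IH[OF this] have "prod_of_commutators G (k + i) (TT (L + 2) (N + 2 * i))" .
  from ext[OF this] show ?case by (simp add: algebra_simps)
qed

lemma pureext: "prod_of_commutators G (Suc j) (TT L (2 * j + 1))"
proof (induction j arbitrary: L)
  case 0 then show ?case using Lend by simp
next
  case (Suc j)
  from ext[OF Suc.IH[of "L + 2"]] show ?case by (simp add: algebra_simps)
qed

lemma culler: "prod_of_commutators G (n div 2 + 1) (cc [^] n)" if "n \<ge> 1" for n :: nat
proof -
  have odd: "prod_of_commutators G (j + 1) (cc [^] (2 * j + 1))" for j
  proof (cases j)
    case 0
    have "prod_of_commutators G 1 cc" unfolding cc_def by (rule pc_comm) auto
    then show ?thesis using 0 by simp
  next
    case (Suc j')
    from E1[OF pureext[of j' 1]] show ?thesis using Suc by (simp add: algebra_simps)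
  qed
  show ?thesis
  proof (cases "even n")
    case True
    then obtain h where h: "n = 2 * h" by (rule evenE)
    with that have "h \<noteq> 0" by simp
    then obtain j where "h = Suc j" by (cases h) auto
    with h have j: "n = 2 * j + 2" by simp
    from peel[OF odd[of j]] show ?thesis using j by (simp add: algebra_simps)
  next
    case False
    then obtain j where j: "n = 2 * j + 1" using oddE by blast
    from odd[of j] show ?thesis using j by simp
  qed
qed

end

locale CLT = CL + fixes M :: nat assumes tors: "a [^] M = \<one>"
begin

lemma bt_per: "bt (k + int M) = bt k"
proof -
  have "a [^] (k + int M) = a [^] k"
    using int_pow_mult[of a k "int M"] tors by (simp add: int_pow_int)
  then show ?thesis by (simp add: bt_def ph_def)
qed
lemma bt_per2: "bt (k - int M) = bt k"
  using bt_per[of "k - int M"] by simp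

definition VV :: "int \<Rightarrow> nat \<Rightarrow> 'a" where "VV L N = cc [^] N \<otimes> RR (int M - 2) \<otimes> PP L"
lemma VV_closed[simp]: "VV L N \<in> carrier G" by (simp add: VV_def)

lemma rel2: "ph 1 cc \<otimes> (cc \<otimes> RR (int M - 2)) = \<one>"
proof -
  have "bt (- (int M - 2)) = bt 2" using bt_per2[of 2] by (simp add: algebra_simps)
  then show ?thesis unfolding ph_cc by (simp add: cc_bt RR_def m_assoc)
qed
lemma rel3: "ph 1 cc \<otimes> (cc \<otimes> (RR (int M - 3) \<otimes> ph 2 cc)) = \<one>"
proof -
  have "bt (- (int M - 3)) = bt 3" using bt_per2[of 3] by (simp add: algebra_simps)
  then show ?thesis unfolding ph_cc by (simp add: cc_bt RR_def m_assoc)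
qed
lemma relP: "PP (int M - 2) = inv (ph 1 cc) \<otimes> inv (ph 2 cc)"
proof -
  have "bt (1 - (int M - 2)) = bt 3" using bt_per2[of 3] by (simp add: algebra_simps)
  then show ?thesis unfolding ph_cc by (simp add: PP_def inv_mult_group m_assoc)
qed

lemma Tm1: "TT (int M - 1) (N + 1) = cc [^] N"
proof -
  have "bt (- (int M - 1)) = bt 1" using bt_per2[of 1] by (simp add: algebra_simps)
  then have "cc \<otimes> RR (int M - 1) = \<one>" by (simp add: cc_bt RR_def m_assoc)
  then show ?thesis by (simp add: TT_def m_assoc)
qed

lemma QC: "cc [^] (p::nat) \<otimes> cc [^] (q::nat) = (ph 2 cc) [^] q \<otimes> (ph 1 cc) [^] p \<otimes>
   commutator G (a [^] (2::int) \<otimes> (ph 1 cc) [^] p) (a [^] (- 1::int) \<otimes> cc [^] q)"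
proof -
  have "ph (- 1) ((ph 1 cc) [^] p) = cc [^] p" by (simp add: ph_pow ph_ph)
  then show ?thesis using Qlemma[of "(ph 1 cc) [^] p" "cc [^] q" "- 1" 2] by (simp add: ph_pow)
qed

lemma pow_split: "x \<in> carrier G \<Longrightarrow> n = p + q + r \<Longrightarrow> x [^] (n::nat) = x [^] (p::nat) \<otimes> x [^] (q::nat) \<otimes> x [^] (r::nat)"
  by (simp add: nat_pow_mult)

lemma rel2': "cc \<otimes> RR (int M - 2) = inv (ph 1 cc)"
proof -
  have "bt (- (int M - 2)) = bt 2" using bt_per2[of 2] by (simp add: algebra_simps)
  then show ?thesis unfolding ph_cc by (simp add: cc_bt RR_def m_assoc inv_mult_group)
qed
lemma rel3': "cc \<otimes> RR (int M - 3) = inv (ph 1 cc) \<otimes> inv (ph 2 cc)"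
proof -
  have "bt (- (int M - 3)) = bt 3" using bt_per2[of 3] by (simp add: algebra_simps)
  then show ?thesis unfolding ph_cc by (simp add: cc_bt RR_def m_assoc inv_mult_group)
qed

lemma phTT1: "ph 2 (TT 1 N) = (ph 2 cc) [^] N \<otimes> ph 1 cc"
  by (simp add: TT_def RR1 ph_mult ph_pow ph_ph)

lemma c3:
  assumes "prod_of_commutators G k (TT 1 N)"
  shows "prod_of_commutators G (Suc k) (TT (int M - 3) (N + 4))"
proof -
  define C1 where "C1 = ph 1 cc"
  define C2 where "C2 = ph 2 cc"
  have [simp]: "C1 \<in> carrier G" "C2 \<in> carrier G" by (simp_all add: C1_def C2_def)
  define K where "K = commutator G (a [^] (2::int) \<otimes> C1 [^] (2::nat)) (a [^] (- 1::int) \<otimes> cc [^] (Suc N))"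
  have "TT (int M - 3) (N + 4) = cc [^] (2::nat) \<otimes> cc [^] (Suc N) \<otimes> (cc \<otimes> RR (int M - 3))"
  proof -
    have "cc [^] (N + 4) = cc [^] (2::nat) \<otimes> cc [^] (Suc N) \<otimes> cc [^] (1::nat)" by (rule pow_split) auto
    then show ?thesis unfolding TT_def by (simp add: m_assoc del: nat_pow_Suc)
  qed
  also have "\<dots> = C2 [^] (Suc N) \<otimes> C1 [^] (2::nat) \<otimes> K \<otimes> (cc \<otimes> RR (int M - 3))"
    unfolding QC C1_def C2_def K_def ..
  finally have t: "TT (int M - 3) (N + 4) = C2 [^] (Suc N) \<otimes> C1 [^] (2::nat) \<otimes> K \<otimes> (cc \<otimes> RR (int M - 3))" .
  have vu: "(cc \<otimes> RR (int M - 3)) \<otimes> (C2 [^] (Suc N) \<otimes> C1 [^] (2::nat)) = inv C1 \<otimes> ph 2 (TT 1 N) \<otimes> C1"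
  proof -
    have p: "C2 [^] (Suc N) = C2 \<otimes> C2 [^] N" by (rule nat_pow_Suc2) simp
    have p2: "C1 [^] (2::nat) = C1 \<otimes> C1" by (simp add: numeral_2_eq_2)
    show ?thesis unfolding rel3' phTT1 C1_def[symmetric] C2_def[symmetric] p p2
      by (simp add: m_assoc del: nat_pow_Suc)
  qed
  show ?thesis unfolding t K_def
    by (rule move2[OF assms _ _ _ _ _ vu]) auto
qed

lemma c2:
  assumes "prod_of_commutators G k (TT 1 N)"
  shows "prod_of_commutators G (Suc k) (TT (int M - 2) (N + 3))"
proof -
  define C1 where "C1 = ph 1 cc"
  define C2 where "C2 = ph 2 cc"
  have [simp]: "C1 \<in> carrier G" "C2 \<in> carrier G" by (simp_all add: C1_def C2_def)
  define K where "K = commutator G (a [^] (2::int) \<otimes> C1 [^] (2::nat)) (a [^] (- 1::int) \<otimes> cc [^] N)"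
  have "TT (int M - 2) (N + 3) = cc [^] (2::nat) \<otimes> cc [^] N \<otimes> (cc \<otimes> RR (int M - 2))"
  proof -
    have "cc [^] (N + 3) = cc [^] (2::nat) \<otimes> cc [^] N \<otimes> cc [^] (1::nat)" by (rule pow_split) auto
    then show ?thesis unfolding TT_def by (simp add: m_assoc del: nat_pow_Suc)
  qed
  also have "\<dots> = C2 [^] N \<otimes> C1 [^] (2::nat) \<otimes> K \<otimes> (cc \<otimes> RR (int M - 2))"
    unfolding QC C1_def C2_def K_def ..
  finally have t: "TT (int M - 2) (N + 3) = C2 [^] N \<otimes> C1 [^] (2::nat) \<otimes> K \<otimes> (cc \<otimes> RR (int M - 2))" .
  have vu: "(cc \<otimes> RR (int M - 2)) \<otimes> (C2 [^] N \<otimes> C1 [^] (2::nat)) = inv C1 \<otimes> ph 2 (TT 1 N) \<otimes> C1"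
  proof -
    have p2: "C1 [^] (2::nat) = C1 \<otimes> C1" by (simp add: numeral_2_eq_2)
    show ?thesis unfolding rel2' phTT1 C1_def[symmetric] C2_def[symmetric] p2
      by (simp add: m_assoc del: nat_pow_Suc)
  qed
  show ?thesis unfolding t K_def
    by (rule move2[OF assms _ _ _ _ _ vu]) auto
qed

lemma c2':
  assumes "prod_of_commutators G k (cc [^] N)"
  shows "prod_of_commutators G (Suc k) (TT (int M - 2) (N + 2))"
proof -
  define C1 where "C1 = ph 1 cc"
  define C2 where "C2 = ph 2 cc"
  have [simp]: "C1 \<in> carrier G" "C2 \<in> carrier G" by (simp_all add: C1_def C2_def)
  define K where "K = commutator G (a [^] (2::int) \<otimes> C1 [^] (1::nat)) (a [^] (- 1::int) \<otimes> cc [^] N)"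
  have "TT (int M - 2) (N + 2) = cc [^] (1::nat) \<otimes> cc [^] N \<otimes> (cc \<otimes> RR (int M - 2))"
  proof -
    have "cc [^] (N + 2) = cc [^] (1::nat) \<otimes> cc [^] N \<otimes> cc [^] (1::nat)" by (rule pow_split) auto
    then show ?thesis unfolding TT_def by (simp add: m_assoc del: nat_pow_Suc)
  qed
  also have "\<dots> = C2 [^] N \<otimes> C1 [^] (1::nat) \<otimes> K \<otimes> (cc \<otimes> RR (int M - 2))"
    unfolding QC C1_def C2_def K_def ..
  finally have t: "TT (int M - 2) (N + 2) = C2 [^] N \<otimes> C1 [^] (1::nat) \<otimes> K \<otimes> (cc \<otimes> RR (int M - 2))" .
  have vu: "(cc \<otimes> RR (int M - 2)) \<otimes> (C2 [^] N \<otimes> C1 [^] (1::nat)) = inv C1 \<otimes> ph 2 (cc [^] N) \<otimes> C1"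
  proof -
    have p4: "ph 2 (cc [^] N) = C2 [^] N" by (simp add: ph_pow C2_def)
    show ?thesis unfolding rel2' C1_def[symmetric] C2_def[symmetric] p4
      by (simp add: m_assoc del: nat_pow_Suc)
  qed
  show ?thesis unfolding t K_def
    by (rule move2[OF assms _ _ _ _ _ vu]) auto
qed

lemma T2V: "prod_of_commutators G k (VV 1 N) \<Longrightarrow> prod_of_commutators G k (TT (int M - 2) (N + 1))"
proof -
  assume h: "prod_of_commutators G k (VV 1 N)"
  have p1: "PP 1 = cc" unfolding PP_def cc_bt by simp
  have "VV 1 N = (cc [^] N \<otimes> RR (int M - 2)) \<otimes> cc" unfolding VV_def p1 ..
  with h have h2: "prod_of_commutators G k ((cc [^] N \<otimes> RR (int M - 2)) \<otimes> cc)" by simp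
  have h3: "prod_of_commutators G k (cc \<otimes> (cc [^] N \<otimes> RR (int M - 2)))"
    by (rule pc_rot[OF h2]) simp_all
  have e: "cc [^] (N + 1) = cc \<otimes> cc [^] N" by (simp only: Suc_eq_plus1[symmetric] nat_pow_Suc2 cc_closed)
  have "TT (int M - 2) (N + 1) = cc \<otimes> (cc [^] N \<otimes> RR (int M - 2))"
    unfolding TT_def e by (simp only: m_assoc cc_closed nat_pow_closed RR_closed)
  with h3 show ?thesis by simp
qed

lemma PP_step: "PP L \<otimes> (ph (- L) cc \<otimes> ph (- L - 1) cc) = PP (L + 2)"
proof -
  have e1: "- L + 1 = 1 - L" "- L - 1 + 1 = - L" "1 - (L + 2) = - L - 1" by simp_all
  show ?thesis unfolding PP_def ph_cc e1 by (simp add: m_assoc)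
qed

lemma Vext:
  assumes "prod_of_commutators G k (VV (L + 2) N)"
  shows "prod_of_commutators G (Suc k) (VV L (N + 2))"
proof -
  define u where "u = ph (- L) cc \<otimes> ph (- L - 1) cc"
  define v where "v = cc [^] N \<otimes> RR (int M - 2) \<otimes> PP L"
  define x where "x = a [^] (- L) \<otimes> ph (- L - 1) cc"
  define y where "y = a [^] (L + 1) \<otimes> cc"
  have q: "cc \<otimes> cc = u \<otimes> commutator G x y"
    using Qlemma[of "ph (- L - 1) cc" cc "L + 1" "- L"]
    by (simp add: u_def x_def y_def ph_ph m_assoc)
  have "VV L (N + 2) = (cc \<otimes> cc) \<otimes> v"
    unfolding VV_def v_def cc_pow2 by (simp add: m_assoc)
  also have "\<dots> = u \<otimes> commutator G x y \<otimes> v" by (simp add: q)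
  finally have t: "VV L (N + 2) = u \<otimes> commutator G x y \<otimes> v" .
  have "v \<otimes> u = VV (L + 2) N"
    by (simp add: v_def u_def VV_def m_assoc PP_step)
  with assms have "prod_of_commutators G k (v \<otimes> u)" by simp
  from pc_move[OF this] show ?thesis unfolding t by (simp add: u_def v_def x_def y_def)
qed

lemma dc3:
  assumes "prod_of_commutators G k (TT 1 N)"
  shows "prod_of_commutators G (Suc k) (VV (int M - 2) (N + 5))"
proof -
  define C1 where "C1 = ph 1 cc"
  define C2 where "C2 = ph 2 cc"
  have [simp]: "C1 \<in> carrier G" "C2 \<in> carrier G" by (simp_all add: C1_def C2_def)
  define K where "K = commutator G (a [^] (2::int) \<otimes> C1 [^] (3::nat)) (a [^] (- 1::int) \<otimes> cc [^] (Suc N))"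
  have "VV (int M - 2) (N + 5) = cc [^] (3::nat) \<otimes> cc [^] (Suc N) \<otimes> (cc \<otimes> RR (int M - 2) \<otimes> PP (int M - 2))"
  proof -
    have "cc [^] (N + 5) = cc [^] (3::nat) \<otimes> cc [^] (Suc N) \<otimes> cc [^] (1::nat)" by (rule pow_split) auto
    then show ?thesis unfolding VV_def by (simp add: m_assoc del: nat_pow_Suc)
  qed
  also have "\<dots> = C2 [^] (Suc N) \<otimes> C1 [^] (3::nat) \<otimes> K \<otimes> (cc \<otimes> RR (int M - 2) \<otimes> PP (int M - 2))"
    unfolding QC C1_def C2_def K_def ..
  finally have t: "VV (int M - 2) (N + 5) = C2 [^] (Suc N) \<otimes> C1 [^] (3::nat) \<otimes> K \<otimes> (cc \<otimes> RR (int M - 2) \<otimes> PP (int M - 2))" .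
  have vu: "(cc \<otimes> RR (int M - 2) \<otimes> PP (int M - 2)) \<otimes> (C2 [^] (Suc N) \<otimes> C1 [^] (3::nat)) = inv (C1 \<otimes> C1) \<otimes> ph 2 (TT 1 N) \<otimes> (C1 \<otimes> C1)"
  proof -
    have p: "C2 [^] (Suc N) = C2 \<otimes> C2 [^] N" by (rule nat_pow_Suc2) simp
    have p3: "C1 [^] (3::nat) = C1 \<otimes> (C1 \<otimes> C1)" by (simp add: numeral_3_eq_3 m_assoc)
    show ?thesis unfolding rel2' relP phTT1 C1_def[symmetric] C2_def[symmetric] p p3
      by (simp add: m_assoc inv_mult_group del: nat_pow_Suc)
  qed
  show ?thesis unfolding t K_def
    by (rule move2[OF assms _ _ _ _ _ vu]) auto
qed

lemma dc2:
  assumes "prod_of_commutators G k (cc [^] N)"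
  shows "prod_of_commutators G (Suc k) (VV (int M - 2) (N + 4))"
proof -
  define C1 where "C1 = ph 1 cc"
  define C2 where "C2 = ph 2 cc"
  have [simp]: "C1 \<in> carrier G" "C2 \<in> carrier G" by (simp_all add: C1_def C2_def)
  define K where "K = commutator G (a [^] (2::int) \<otimes> C1 [^] (2::nat)) (a [^] (- 1::int) \<otimes> cc [^] (Suc N))"
  have "VV (int M - 2) (N + 4) = cc [^] (2::nat) \<otimes> cc [^] (Suc N) \<otimes> (cc \<otimes> RR (int M - 2) \<otimes> PP (int M - 2))"
  proof -
    have "cc [^] (N + 4) = cc [^] (2::nat) \<otimes> cc [^] (Suc N) \<otimes> cc [^] (1::nat)" by (rule pow_split) auto
    then show ?thesis unfolding VV_def by (simp add: m_assoc del: nat_pow_Suc)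
  qed
  also have "\<dots> = C2 [^] (Suc N) \<otimes> C1 [^] (2::nat) \<otimes> K \<otimes> (cc \<otimes> RR (int M - 2) \<otimes> PP (int M - 2))"
    unfolding QC C1_def C2_def K_def ..
  finally have t: "VV (int M - 2) (N + 4) = C2 [^] (Suc N) \<otimes> C1 [^] (2::nat) \<otimes> K \<otimes> (cc \<otimes> RR (int M - 2) \<otimes> PP (int M - 2))" .
  have vu: "(cc \<otimes> RR (int M - 2) \<otimes> PP (int M - 2)) \<otimes> (C2 [^] (Suc N) \<otimes> C1 [^] (2::nat)) = inv (C1 \<otimes> C1) \<otimes> ph 2 (cc [^] N) \<otimes> (C1 \<otimes> C1)"
  proof -
    have p: "C2 [^] (Suc N) = C2 \<otimes> C2 [^] N" by (rule nat_pow_Suc2) simp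
    have p2: "C1 [^] (2::nat) = C1 \<otimes> C1" by (simp add: numeral_2_eq_2)
    have p4: "ph 2 (cc [^] N) = C2 [^] N" by (simp add: ph_pow C2_def)
    show ?thesis unfolding rel2' relP C1_def[symmetric] C2_def[symmetric] p p2 p4
      by (simp add: m_assoc inv_mult_group del: nat_pow_Suc)
  qed
  show ?thesis unfolding t K_def
    by (rule move2[OF assms _ _ _ _ _ vu]) auto
qed


lemma Vchain: "prod_of_commutators G k (VV (L + 2 * int i) N) \<Longrightarrow> prod_of_commutators G (k + i) (VV L (N + 2 * i))"
proof (induction i arbitrary: k L N)
  case 0 then show ?case by simp
next
  case (Suc i)
  have "prod_of_commutators G k (VV ((L + 2) + 2 * int i) N)" using Suc.prems by (simp add: algebra_simps)
  from Suc.IH[OF this] have "prod_of_commutators G (k + i) (VV (L + 2) (N + 2 * i))" .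
  from Vext[OF this] show ?case by (simp add: algebra_simps)
qed

lemma pc_eq: "prod_of_commutators G k x \<Longrightarrow> k = k' \<Longrightarrow> x = x' \<Longrightarrow> prod_of_commutators G k' x'"
  by simp
lemma TT0': "n = n' \<Longrightarrow> TT 0 n = cc [^] n'" by (simp add: TT0)
lemma TT1': "n = n' \<Longrightarrow> TT 1 n = TT 1 n'" by simp
lemma ccpow': "n = n' \<Longrightarrow> cc [^] (n::nat) = cc [^] n'" by simp

lemma pc_one_pow: "prod_of_commutators G 0 (cc [^] (0::nat))"
  using pc_zero by simp

lemma cycE:
  assumes "even M" "4 \<le> M" "prod_of_commutators G k (TT 1 N)"
  shows "prod_of_commutators G (k + (M div 2 - 1)) (TT 1 (N + M))"
proof -
  define i where "i = (M - 4) div 2"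
  have Mi: "M = 2 * i + 4" using assms(1,2) unfolding i_def by (auto elim!: evenE)
  have "prod_of_commutators G (Suc k) (TT (1 + 2 * int i) (N + 4))"
    using c3[OF assms(3)] Mi by (simp add: algebra_simps)
  from extchain[OF this] show ?thesis
    by (rule pc_eq[OF _ _ TT1']) (simp_all add: Mi)
qed

lemma baseE:
  assumes "even M" "2 \<le> M"
  shows "prod_of_commutators G ((M - 2) div 2) (TT 1 (M - 1))"
proof -
  define i where "i = (M - 2) div 2"
  have Mi: "M = 2 * i + 2" using assms unfolding i_def by (auto elim!: evenE)
  have "TT (int M - 1) (0 + 1) = cc [^] (0::nat)" by (rule Tm1)
  then have "prod_of_commutators G 0 (TT (1 + 2 * int i) 1)" using Mi pc_one_pow by (simp add: algebra_simps)
  from extchain[OF this] have "prod_of_commutators G i (TT 1 (1 + 2 * i))" by simp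
  moreover have "(M - 2) div 2 = i" "M - 1 = 1 + 2 * i" using Mi by (simp_all add: i_def)
  ultimately show ?thesis by simp
qed

lemma cycO:
  assumes "odd M" "3 \<le> M" "prod_of_commutators G k (TT 1 N)"
  shows "prod_of_commutators G (k + (M - 2)) (TT 1 (N + 2 * M))"
proof -
  define i where "i = (M - 3) div 2"
  have Mi: "M = 2 * i + 3" using assms(1,2) unfolding i_def by (auto elim!: oddE)
  have "prod_of_commutators G (Suc k) (VV (1 + 2 * int i) (N + 5))"
    using dc3[OF assms(3)] Mi by (simp add: algebra_simps)
  from Vchain[OF this] have "prod_of_commutators G (Suc k + i) (VV 1 (N + 5 + 2 * i))" .
  from T2V[OF this] have "prod_of_commutators G (Suc k + i) (TT (1 + 2 * int i) (N + 5 + 2 * i + 1))"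
    using Mi by (simp add: algebra_simps)
  from extchain[OF this] show ?thesis
    by (rule pc_eq[OF _ _ TT1']) (simp_all add: Mi)
qed

lemma baseO:
  assumes "odd M" "3 \<le> M"
  shows "prod_of_commutators G (M - 2) (TT 1 (2 * M - 1))"
proof -
  define i where "i = (M - 3) div 2"
  have Mi: "M = 2 * i + 3" using assms(1,2) unfolding i_def by (auto elim!: oddE)
  have "prod_of_commutators G (Suc 0) (VV (1 + 2 * int i) (0 + 4))"
    using dc2[OF pc_one_pow] Mi by (simp add: algebra_simps)
  from Vchain[OF this] have "prod_of_commutators G (Suc 0 + i) (VV 1 (0 + 4 + 2 * i))" .
  from T2V[OF this] have "prod_of_commutators G (Suc 0 + i) (TT (1 + 2 * int i) (0 + 4 + 2 * i + 1))"
    using Mi by (simp add: algebra_simps)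
  from extchain[OF this] show ?thesis
    by (rule pc_eq[OF _ _ TT1']) (simp_all add: Mi)
qed

lemma entryII:
  assumes "odd M" "3 \<le> M" "prod_of_commutators G k (TT 1 N)"
  shows "prod_of_commutators G (k + (M - 1) div 2) (cc [^] (N + M + 1))"
proof -
  define i where "i = (M - 3) div 2"
  have Mi: "M = 2 * i + 3" using assms(1,2) unfolding i_def by (auto elim!: oddE)
  have "prod_of_commutators G (Suc k) (TT (0 + 2 * int i) (N + 4))"
    using c3[OF assms(3)] Mi by (simp add: algebra_simps)
  from extchain[OF this] have "prod_of_commutators G (Suc k + i) (TT 0 (N + 4 + 2 * i))" .
  then show ?thesis
    by (rule pc_eq[OF _ _ TT0']) (simp_all add: Mi)
qed

lemma entryIII:
  assumes "odd M" "3 \<le> M" "prod_of_commutators G k (cc [^] N)"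
  shows "prod_of_commutators G (k + (M - 1) div 2) (cc [^] (N + M))"
proof -
  define i where "i = (M - 1) div 2"
  have Mi: "M = 2 * i + 1" using assms(1,2) unfolding i_def by (auto elim!: oddE)
  have "TT (int M - 1) (N + 1) = cc [^] N" by (rule Tm1)
  then have "prod_of_commutators G k (TT (0 + 2 * int i) (N + 1))" using Mi assms(3) by (simp add: algebra_simps)
  from extchain[OF this] have "prod_of_commutators G (k + i) (TT 0 (N + 1 + 2 * i))" .
  then show ?thesis
    by (rule pc_eq[OF _ _ TT0']) (simp_all add: Mi)
qed

lemma entryEa:
  assumes "even M" "4 \<le> M" "prod_of_commutators G k (TT 1 N)"
  shows "prod_of_commutators G (k + M div 2) (cc [^] (N + M + 1))"
proof -
  define i where "i = (M - 2) div 2"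
  have Mi: "M = 2 * i + 2" using assms(1,2) unfolding i_def by (auto elim!: evenE)
  have "prod_of_commutators G (Suc k) (TT (0 + 2 * int i) (N + 3))"
    using c2[OF assms(3)] Mi by (simp add: algebra_simps)
  from extchain[OF this] have "prod_of_commutators G (Suc k + i) (TT 0 (N + 3 + 2 * i))" .
  then show ?thesis
    by (rule pc_eq[OF _ _ TT0']) (simp_all add: Mi)
qed

lemma entryEb:
  assumes "even M" "4 \<le> M"
  shows "prod_of_commutators G (M div 2) (cc [^] M)"
proof -
  define i where "i = (M - 2) div 2"
  have Mi: "M = 2 * i + 2" using assms(1,2) unfolding i_def by (auto elim!: evenE)
  have "prod_of_commutators G (Suc 0) (TT (0 + 2 * int i) (0 + 2))"
    using c2'[OF pc_one_pow] Mi by (simp add: algebra_simps)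
  from extchain[OF this] have "prod_of_commutators G (Suc 0 + i) (TT 0 (0 + 2 + 2 * i))" .
  then show ?thesis
    by (rule pc_eq[OF _ _ TT0']) (simp_all add: Mi)
qed


lemma TE:
  assumes M: "even M" "4 \<le> M"
  shows "odd N \<Longrightarrow> \<exists>k. prod_of_commutators G k (TT 1 N) \<and> k + (N + 2) div M \<le> (N + 1) div 2"
proof (induction N rule: less_induct)
  case (less N)
  show ?case
  proof (cases "M \<le> N")
    case True
    define N' where "N' = N - M"
    have NN: "N = N' + M" using True by (simp add: N'_def)
    have oN': "odd N'" using less.prems M(1) NN by simp
    have "N' < N" using M(2) NN by simp
    from less.IH[OF this oN'] obtain k where k: "prod_of_commutators G k (TT 1 N')" "k + (N' + 2) div M \<le> (N' + 1) div 2"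
      by blast
    from cycE[OF M k(1)] have h: "prod_of_commutators G (k + (M div 2 - 1)) (TT 1 N)" using NN by simp
    have d1: "(N + 2) div M = (N' + 2) div M + 1"
      using NN M(2) div_add_self2[of M "N' + 2"] by (simp add: algebra_simps)
    obtain p where p: "N' = 2 * p + 1" using oN' by (rule oddE)
    obtain q where q: "M = 2 * q" using M(1) by (rule evenE)
    have d2: "(N + 1) div 2 = (N' + 1) div 2 + M div 2" using NN p q by simp
    show ?thesis using h k(2) d1 d2 M(2) by (intro exI[of _ "k + (M div 2 - 1)"]) auto
  next
    case False
    show ?thesis
    proof (cases "N = M - 1")
      case True
      have "prod_of_commutators G ((M - 2) div 2) (TT 1 N)" using baseE[OF M(1)] M(2) True by simp
      moreover have "(N + 2) div M = 1"
      proof -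
        have "N + 2 = M + 1" using True M(2) by simp
        then show ?thesis using div_add_self1[of M 1] M(2) by simp
      qed
      moreover have "(N + 1) div 2 = M div 2" using True M(2) by simp
      ultimately show ?thesis using M by (intro exI[of _ "(M - 2) div 2"]) (auto elim!: evenE)
    next
      case False2: False
      obtain j where j: "N = 2 * j + 1" using less.prems by (rule oddE)
      obtain q where q: "M = 2 * q" using M(1) by (rule evenE)
      have "N + 2 < M" using False False2 q j by presburger
      then have "(N + 2) div M = 0" by simp
      moreover have "prod_of_commutators G (Suc j) (TT 1 N)" using pureext j by simp
      ultimately show ?thesis using j by (intro exI[of _ "Suc j"]) auto
    qed
  qed
qed

lemma TO:
  assumes M: "odd M" "3 \<le> M"
  shows "(\<forall>t. odd t \<longrightarrow> t \<le> M - 2 \<longrightarrow> prod_of_commutators G (j * (M - 2) + (t + 1) div 2) (TT 1 (2 * M * j + t)))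
       \<and> prod_of_commutators G (j * (M - 2) + (M - 2)) (TT 1 (2 * M * j + (2 * M - 1)))"
proof (induction j)
  case 0
  have "prod_of_commutators G ((t + 1) div 2) (TT 1 t)" if "odd t" for t
  proof -
    obtain s where "t = 2 * s + 1" using \<open>odd t\<close> by (rule oddE)
    then show ?thesis using pureext[of s 1] by simp
  qed
  then show ?case using baseO[OF M] by simp
next
  case (Suc j)
  have A: "prod_of_commutators G (Suc j * (M - 2) + (t + 1) div 2) (TT 1 (2 * M * Suc j + t))"
    if "odd t" "t \<le> M - 2" for t
  proof -
    from Suc.IH that have "prod_of_commutators G (j * (M - 2) + (t + 1) div 2) (TT 1 (2 * M * j + t))" by blast
    from cycO[OF M this] show ?thesis by (rule pc_eq[OF _ _ TT1']) (simp, simp add: algebra_simps)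
  qed
  have B: "prod_of_commutators G (Suc j * (M - 2) + (M - 2)) (TT 1 (2 * M * Suc j + (2 * M - 1)))"
  proof -
    from Suc.IH have "prod_of_commutators G (j * (M - 2) + (M - 2)) (TT 1 (2 * M * j + (2 * M - 1)))" by blast
    from cycO[OF M this] show ?thesis by (rule pc_eq[OF _ _ TT1']) (simp, use M in \<open>simp add: algebra_simps\<close>)
  qed
  show ?case using A B by blast
qed


lemma cc_pc1: "prod_of_commutators G 1 cc" unfolding cc_def by (rule pc_comm) auto

lemma mainE_odd:
  assumes M: "even M" "4 \<le> M" and n: "odd n"
  shows "\<exists>k. prod_of_commutators G k (cc [^] n) \<and> k + n div M \<le> n div 2 + 1"
proof (cases "n = 1")
  case True
  then show ?thesis using cc_pc1 M by (intro exI[of _ 1]) auto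
next
  case False
  obtain p where p: "n = 2 * p + 1" using n by (rule oddE)
  with False obtain p' where p': "p = Suc p'" by (cases p) auto
  define N where "N = 2 * p' + 1"
  have nN: "n = N + 2" "odd N" using p p' by (simp_all add: N_def)
  from TE[OF M nN(2)] obtain k where k: "prod_of_commutators G k (TT 1 N)" "k + (N + 2) div M \<le> (N + 1) div 2" by blast
  from E1[OF k(1)] have "prod_of_commutators G (Suc k) (cc [^] n)" using nN by simp
  moreover have "(N + 1) div 2 = n div 2" using nN N_def by simp
  ultimately show ?thesis using k(2) nN by (intro exI[of _ "Suc k"]) auto
qed

lemma mainE:
  assumes M: "even M" "4 \<le> M" and n: "0 < n"
  shows "\<exists>k. prod_of_commutators G k (cc [^] n) \<and> k + n div M \<le> n div 2 + 1"
proof (cases "odd n")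
  case True then show ?thesis using mainE_odd[OF M] by blast
next
  case ev: False
  show ?thesis
  proof (cases "M dvd n")
    case True
    then obtain q where q: "n = M * q" ..
    obtain h where h: "M = 2 * h" using M(1) by (rule evenE)
    show ?thesis
    proof (cases "q = 1")
      case True
      then show ?thesis using entryEb[OF M] q M by (intro exI[of _ "M div 2"]) auto
    next
      case False
      have q2: "q \<ge> 2" using False q n by (cases q) auto
      define q' where "q' = q - 2"
      have q': "q = q' + 2" using q2 by (simp add: q'_def)
      have h2: "h \<ge> 2" using h M(2) by simp
      define r where "r = h * (q' + 1) - 1"
      have hr: "h * (q' + 1) = r + 1" using h2 unfolding r_def by (simp add: algebra_simps)
      define N where "N = 2 * r + 1"
      have Mq: "M * (q' + 1) = 2 * r + 2" using h hr by (simp add: algebra_simps)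
      have nq: "n = M * (q' + 1) + M" using q q' by (simp add: algebra_simps)
      have NN: "n = N + M + 1" "odd N" using nq Mq by (simp_all add: N_def)
      from TE[OF M NN(2)] obtain k where k: "prod_of_commutators G k (TT 1 N)" "k + (N + 2) div M \<le> (N + 1) div 2" by blast
      from entryEa[OF M k(1)] have pc: "prod_of_commutators G (k + M div 2) (cc [^] n)" using NN by simp
      have d1: "(N + 2) div M = q' + 1"
      proof -
        have "N + 2 = 1 + M * (q' + 1)" using Mq by (simp add: N_def)
        then show ?thesis using div_mult_self2[of M 1 "q' + 1"] M(2) by simp
      qed
      have d2: "(N + 1) div 2 = r + 1" by (simp add: N_def)
      have d3: "n div M = q' + 2" using q q' M(2) by simp
      have d4: "n div 2 = r + 1 + h" using nq Mq h by simp
      have d5: "M div 2 = h" using h by simp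
      show ?thesis using pc k(2) d1 d2 d3 d4 d5 h2 by (intro exI[of _ "k + M div 2"]) simp
    qed
  next
    case False
    have o: "odd (n - 1)" using ev n by simp
    from mainE_odd[OF M o] obtain k where k: "prod_of_commutators G k (cc [^] (n - 1))" "k + (n - 1) div M \<le> (n - 1) div 2 + 1" by blast
    from peel[OF k(1)] have "prod_of_commutators G (Suc k) (cc [^] n)" using n by simp
    moreover have "(n - 1) div M = n div M" using div_pred[OF False] M by simp
    moreover have "n div 2 = (n - 1) div 2 + 1" using ev n by (auto elim!: evenE)
    ultimately show ?thesis using k(2) by (intro exI[of _ "Suc k"]) auto
  qed
qed


lemma mainO:
  assumes M: "odd M" "3 \<le> M"
  shows "0 < n \<Longrightarrow> \<exists>k. prod_of_commutators G k (cc [^] n) \<and> k + n div M \<le> n div 2 + 1"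
proof (induction n rule: less_induct)
  case (less n)
  obtain p where p: "M = 2 * p + 1" using M(1) by (rule oddE)
  define h where "h = p - 1"
  have h: "M = 2 * h + 3" using p M(2) by (simp add: h_def)
  have Mpos: "0 < M" using M by simp
  have TOa: "prod_of_commutators G (j * (2 * h + 1) + (t + 1) div 2) (TT 1 (2 * M * j + t))"
    if "odd t" "t \<le> 2 * h + 1" for j t
    using TO[OF M, of j] that h by simp
  have TOb: "prod_of_commutators G (j * (2 * h + 1) + (2 * h + 1)) (TT 1 (2 * M * j + (4 * h + 5)))" for j
  proof -
    have "prod_of_commutators G (j * (M - 2) + (M - 2)) (TT 1 (2 * M * j + (2 * M - 1)))" using TO[OF M, of j] by blast
    then show ?thesis by (rule pc_eq[OF _ _ TT1']) (simp_all add: h algebra_simps)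
  qed
  have eII: "prod_of_commutators G (k + (h + 1)) (cc [^] (N + M + 1))" if "prod_of_commutators G k (TT 1 N)" for k N
    using entryII[OF M that] h by simp
  have eIII: "prod_of_commutators G (k + (h + 1)) (cc [^] (N + M))" if "prod_of_commutators G k (cc [^] N)" for k N
    using entryIII[OF M that] h by simp
  show ?case
  proof (cases "n < M")
    case True
    then have "n div M = 0" by simp
    with culler[of n] less.prems show ?thesis by (intro exI[of _ "n div 2 + 1"]) auto
  next
    case nM: False
    show ?thesis
    proof (cases "odd n")
      case True
      define j where "j = n div (2 * M)"
      define r where "r = n mod (2 * M)"
      have nj: "n = 2 * M * j + r" by (simp add: j_def r_def)
      have rlt: "r < 2 * M" using Mpos by (simp add: r_def)
      have orr: "odd r" using True nj by simp
      have dM: "n div M = 2 * j + r div M"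
      proof -
        have "n = r + M * (2 * j)" using nj by (simp add: algebra_simps)
        then show ?thesis using div_mult_self2[of M r "2 * j"] Mpos by simp
      qed
      have d2: "n div 2 = M * j + r div 2"
      proof -
        have "n = r + 2 * (M * j)" using nj by (simp add: algebra_simps)
        then show ?thesis by simp
      qed
      obtain s where s: "r = 2 * s + 1" using orr by (rule oddE)
      have s2: "r div 2 = s" using s by simp
      consider (r1) "s = 0" | (r2) "1 \<le> s" "s \<le> h" | (r3) "s = h + 1" | (r4) "h + 2 \<le> s" by linarith
      then show ?thesis
      proof cases
        case r1
        have j0: "j \<noteq> 0"
        proof
          assume "j = 0"
          then have "n = 1" using nj s r1 by simp
          then show False using nM M by simp
        qed
        then obtain j' where j': "j = Suc j'" by (cases j) auto
        have "prod_of_commutators G (j' * (2 * h + 1) + (2 * h + 1)) (TT 1 (2 * M * j' + (4 * h + 5)))" by (rule TOb)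
        from E1[OF this] have pc: "prod_of_commutators G (Suc (j' * (2 * h + 1) + (2 * h + 1))) (cc [^] n)"
          by (rule pc_eq[OF _ _ ccpow']) (use nj s r1 j' h in \<open>simp_all add: algebra_simps\<close>)
        have "r div M = 0" using s r1 h by simp
        then show ?thesis using pc dM d2 s2 r1 j' h by (intro exI[of _ "Suc (j' * (2 * h + 1) + (2 * h + 1))"]) (simp add: algebra_simps)
      next
        case r2
        define t where "t = 2 * s - 1"
        have t: "odd t" "t \<le> 2 * h + 1" "t + 2 = r" "(t + 1) div 2 = s" using r2 s by (auto simp: t_def)
        from E1[OF TOa[OF t(1,2), of j]] have pc: "prod_of_commutators G (Suc (j * (2 * h + 1) + s)) (cc [^] n)"
          by (rule pc_eq[OF _ _ ccpow']) (use nj t in \<open>simp_all add: algebra_simps\<close>)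
        have "r div M = 0" using s r2 h by simp
        then show ?thesis using pc dM d2 s2 h by (intro exI[of _ "Suc (j * (2 * h + 1) + s)"]) (simp add: algebra_simps)
      next
        case r3
        have rM: "r = M" using s r3 h by simp
        have rdM: "r div M = 1" using rM Mpos by simp
        show ?thesis
        proof (cases j)
          case 0
          have "prod_of_commutators G (0 + (h + 1)) (cc [^] (0 + M))" by (rule eIII[OF pc_one_pow])
          then have pc: "prod_of_commutators G (h + 1) (cc [^] n)" using nj 0 rM by simp
          show ?thesis using pc dM d2 s2 rdM 0 r3 by (intro exI[of _ "h + 1"]) simp
        next
          case (Suc j')
          have pc: "prod_of_commutators G (j' * (2 * h + 1) + (2 * h + 1) + (h + 1)) (cc [^] n)"
            using eII[OF TOb[of j']] by (rule pc_eq[OF _ _ ccpow']) (use nj Suc rM h in \<open>simp_all add: algebra_simps\<close>)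
          show ?thesis using pc dM d2 s2 rdM Suc r3 h by (intro exI[of _ "j' * (2 * h + 1) + (2 * h + 1) + (h + 1)"]) (simp add: algebra_simps)
        qed
      next
        case r4
        define u where "u = s - h - 2"
        have su: "s = u + h + 2" using r4 by (simp add: u_def)
        have uh: "u \<le> h" using rlt s su h by simp
        define t where "t = 2 * u + 1"
        have t: "odd t" "t \<le> 2 * h + 1" "(t + 1) div 2 = u + 1" using uh by (simp_all add: t_def)
        have tr: "2 * M * j + t + M + 1 = n" using nj s su h by (simp add: t_def)
        have pc: "prod_of_commutators G (j * (2 * h + 1) + (u + 1) + (h + 1)) (cc [^] n)"
          using eII[OF TOa[OF t(1,2), of j]] by (rule pc_eq[OF _ _ ccpow']) (use t tr in simp_all)
        have rdM: "r div M = 1"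
        proof -
          have "r = (2 * u + 2) + M" using s su h by simp
          moreover have "(2 * u + 2) div M = 0" using uh h by simp
          ultimately show ?thesis using div_add_self2[of M "2 * u + 2"] Mpos by simp
        qed
        show ?thesis using pc dM d2 s2 rdM su h by (intro exI[of _ "j * (2 * h + 1) + (u + 1) + (h + 1)"]) (simp add: algebra_simps)
      qed
    next
      case ev: False
      show ?thesis
      proof (cases "M dvd n")
        case True
        have "n \<noteq> M" using ev M(1) by auto
        then have lt: "n - M < n" "0 < n - M" using nM M by auto
        from less.IH[OF lt] obtain k where k: "prod_of_commutators G k (cc [^] (n - M))" "k + (n - M) div M \<le> (n - M) div 2 + 1" by blast
        from eIII[OF k(1)] have pc: "prod_of_commutators G (k + (h + 1)) (cc [^] n)" using nM by simp
        have d1: "n div M = (n - M) div M + 1"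
        proof -
          have "n = (n - M) + M" using nM by simp
          then show ?thesis using div_add_self2[of M "n - M"] Mpos by simp
        qed
        have d2: "n div 2 = (n - M) div 2 + h + 2"
        proof -
          obtain p where p: "n = 2 * p" using ev by auto
          define w where "w = p - h - 2"
          have pw: "p = w + h + 2" using p nM h unfolding w_def by linarith
          have "n - M = 2 * w + 1" using p pw h by simp
          then show ?thesis using p pw by simp
        qed
        show ?thesis using pc k(2) d1 d2 by (intro exI[of _ "k + (h + 1)"]) simp
      next
        case False
        have lt: "n - 1 < n" "0 < n - 1" using nM M less.prems by auto
        from less.IH[OF lt] obtain k where k: "prod_of_commutators G k (cc [^] (n - 1))" "k + (n - 1) div M \<le> (n - 1) div 2 + 1" by blast
        from peel[OF k(1)] have "prod_of_commutators G (Suc k) (cc [^] n)" using lt by simp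
        moreover have "(n - 1) div M = n div M" using div_pred[OF False] Mpos by simp
        moreover have "n div 2 = (n - 1) div 2 + 1" using ev less.prems by (auto elim!: evenE)
        ultimately show ?thesis using k(2) by (intro exI[of _ "Suc k"]) auto
      qed
    qed
  qed
qed


lemma m2:
  assumes M2: "M = 2" and n: "0 < (n::nat)"
  shows "prod_of_commutators G 1 (cc [^] n)"
proof -
  have bt2: "bt 2 = bt 0" using bt_per[of 0] M2 by simp
  have key: "ph 1 cc = inv cc" unfolding ph_cc using bt2 by (simp add: cc_bt inv_mult_group)
  have pinv: "ph 1 (inv (cc [^] j)) = cc [^] j" for j :: nat
    by (simp add: ph_inv ph_pow key nat_pow_inv)
  show ?thesis
  proof (cases "even n")
    case True
    then obtain j where j: "n = 2 * j" by (rule evenE)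
    have "commutator G a (cc [^] j) = cc [^] j \<otimes> cc [^] j" by (simp add: comm_a pinv)
    also have "\<dots> = cc [^] (j + j)" by (rule nat_pow_mult) simp
    also have "\<dots> = cc [^] n" using j by (simp add: mult_2)
    finally have e: "commutator G a (cc [^] j) = cc [^] n" .
    show ?thesis unfolding e[symmetric] by (rule pc_comm) auto
  next
    case False
    then obtain j where j: "n = 2 * j + 1" by (rule oddE)
    have "commutator G a (b \<otimes> cc [^] j) = ph 1 (inv (cc [^] j)) \<otimes> ph 1 (inv b) \<otimes> (b \<otimes> cc [^] j)"
      by (simp add: comm_a inv_mult_group ph_mult)
    also have "\<dots> = cc [^] j \<otimes> (inv (bt 1) \<otimes> bt 0) \<otimes> cc [^] j"
      by (simp add: pinv ph_inv m_assoc bt_def)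
    also have "\<dots> = cc [^] n"
    proof -
      have "cc [^] n = cc [^] j \<otimes> cc [^] (1::nat) \<otimes> cc [^] j" by (rule pow_split) (use j in auto)
      then show ?thesis unfolding cc_bt[symmetric] by simp
    qed
    finally have e: "commutator G a (b \<otimes> cc [^] j) = cc [^] n" .
    show ?thesis unfolding e[symmetric] by (rule pc_comm) auto
  qed
qed

end

context CL begin

lemma main:
  assumes a1: "a \<noteq> \<one>" and n: "0 < n"
  shows "\<exists>k. prod_of_commutators G k (cc [^] n) \<and> int k \<le> int (n div 2) - int (n div ord a) + 1"
proof (cases "n div ord a = 0")
  case True
  then show ?thesis using culler[of n] n by (intro exI[of _ "n div 2 + 1"]) auto
next
  case False
  define m where "m = ord a"
  have m0: "m \<noteq> 0"
  proof
    assume "m = 0"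
    then have "n div ord a = 0" using m_def by simp
    with False show False by simp
  qed
  have m1: "m \<noteq> 1" using a1 ord_eq_1[of a] m_def by auto
  interpret T: CLT G a b m by unfold_locales (simp add: m_def)
  have mm: "ord a = m" by (simp add: m_def)
  have m2': "2 \<le> m" using m0 m1 by simp
  show ?thesis
  proof (cases "m = 2")
    case True
    from T.m2[OF True n] show ?thesis unfolding mm True by (intro exI[of _ 1]) auto
  next
    case ne2: False
    show ?thesis
    proof (cases "even m")
      case True
      then obtain q where q: "m = 2 * q" by (rule evenE)
      have "4 \<le> m" using q m2' ne2 by simp
      from T.mainE[OF True this n] obtain k where "prod_of_commutators G k (cc [^] n)" "k + n div m \<le> n div 2 + 1" by blast
      then show ?thesis unfolding mm by (intro exI[of _ k]) auto
    next
      case False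
      have "3 \<le> m" using m2' ne2 by simp
      from T.mainO[OF False this n] obtain k where "prod_of_commutators G k (cc [^] n)" "k + n div m \<le> n div 2 + 1" by blast
      then show ?thesis unfolding mm by (intro exI[of _ k]) auto
    qed
  qed
qed

end

theorem mainTheorem4:
  fixes G (structure) and a b :: 'a and n :: nat
  assumes "group G"
    and "a \<in> carrier G" and "b \<in> carrier G"
    and "a \<noteq> \<one>" and "b \<noteq> \<one>"
    and "n > 0"
  shows "int (commutator_length G (commutator G a b [^] n))
           \<le> int (n div 2) - int (n div group.ord G a) + 1"
proof -
  interpret CL G a b using assms by (simp add: CL_def CL_axioms_def)
  obtain k where k: "prod_of_commutators G k (cc [^] n)" "int k \<le> int (n div 2) - int (n div ord a) + 1"
    using main[OF assms(4,6)] by blast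
  have "commutator_length G (cc [^] n) \<le> k" by (rule cl_le[OF k(1)])
  then show ?thesis using k(2) unfolding cc_def by simp
qed

end
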